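(* Let $G$ be a connected graph with vertices $v_1,\dots,v_n$, and let $k_1,k$ be nonnegative integers. Then \[ \sum_{i=1}^{n} dav(G-v_i,k_1,k,k)=(n-2-k_1-2k)\,dav(G,k_1,k,k)+(k_1+1)\,dav(G,k_1+1,k,k)+(k+1)\,dav(G,k_1,k,k+1). \]
   Context: All graphs are finite, simple and undirected. $G-v$ denotes the graph obtained from $G$ by deleting vertex $v$ and its incident edges. For a graph $F$ and nonnegative integers $k_1,k_2,k_3$, $dav(F,k_1,k_2,k_3)$ denotes the number of pairs of adjacent vertices $x$ and $y$ in $F$ such that exactly $k_1$ vertices are adjacent to both $x$ and $y$, exactly $k_2$ vertices other than $y$ are adjacent to $x$ but not to $y$, and exactly $k_3$ vertices other than $x$ are adjacent to $y$ but not to $x$. *)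

theory Defs
  imports Main
begin

definition simple_graph :: "'a set \<Rightarrow> ('a \<Rightarrow> 'a \<Rightarrow> bool) \<Rightarrow> bool" where
  "simple_graph V E \<longleftrightarrow> finite V \<and> (\<forall>x y. E x y \<longrightarrow> x \<in> V \<and> y \<in> V)
     \<and> (\<forall>x y. E x y \<longrightarrow> E y x) \<and> (\<forall>x. \<not> E x x)"

definition connected_graph :: "'a set \<Rightarrow> ('a \<Rightarrow> 'a \<Rightarrow> bool) \<Rightarrow> bool" where
  "connected_graph V E \<longleftrightarrow> V \<noteq> {} \<and> (\<forall>x\<in>V. \<forall>y\<in>V. E\<^sup>*\<^sup>* x y)"

definition nbhd :: "'a set \<Rightarrow> ('a \<Rightarrow> 'a \<Rightarrow> bool) \<Rightarrow> 'a \<Rightarrow> 'a set" where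
  "nbhd V E x = {z \<in> V. E x z}"

definition del_vertex_V :: "'a set \<Rightarrow> 'a \<Rightarrow> 'a set" where
  "del_vertex_V V v = V - {v}"

definition del_vertex_E :: "('a \<Rightarrow> 'a \<Rightarrow> bool) \<Rightarrow> 'a \<Rightarrow> 'a \<Rightarrow> 'a \<Rightarrow> bool" where
  "del_vertex_E E v = (\<lambda>a b. E a b \<and> a \<noteq> v \<and> b \<noteq> v)"

definition dav :: "'a set \<Rightarrow> ('a \<Rightarrow> 'a \<Rightarrow> bool) \<Rightarrow> nat \<Rightarrow> nat \<Rightarrow> nat \<Rightarrow> nat" where
  "dav V E k1 k2 k3 = card {{x, y} | x y. x \<in> V \<and> y \<in> V \<and> E x y
      \<and> card (nbhd V E x \<inter> nbhd V E y) = k1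
      \<and> card (nbhd V E x - nbhd V E y - {y}) = k2
      \<and> card (nbhd V E y - nbhd V E x - {x}) = k3}"

end

theory Submission
  imports Defs
begin

definition trip :: "'a set \<Rightarrow> ('a \<Rightarrow> 'a \<Rightarrow> bool) \<Rightarrow> 'a \<Rightarrow> 'a \<Rightarrow> nat \<times> nat \<times> nat" where
  "trip V E x y = (card (nbhd V E x \<inter> nbhd V E y), card (nbhd V E x - nbhd V E y - {y}),
     card (nbhd V E y - nbhd V E x - {x}))"

definition Ed :: "('a \<Rightarrow> 'a \<Rightarrow> bool) \<Rightarrow> 'a set set" where
  "Ed E = {{x, y} | x y. E x y}"

definition ind :: "'a set \<Rightarrow> ('a \<Rightarrow> 'a \<Rightarrow> bool) \<Rightarrow> nat \<Rightarrow> nat \<Rightarrow> nat \<Rightarrow> 'a set \<Rightarrow> int" where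
  "ind V E k1 k2 k3 e = (if (\<exists>x y. e = {x, y} \<and> E x y \<and> trip V E x y = (k1, k2, k3)) then 1 else 0)"

lemma Ed_finite:
  assumes "simple_graph V E" shows "finite (Ed E)"
proof -
  have "Ed E \<subseteq> Pow V" using assms unfolding Ed_def simple_graph_def by auto
  moreover have "finite V" using assms unfolding simple_graph_def by auto
  ultimately show ?thesis by (meson finite_Pow_iff finite_subset)
qed

lemma card_filter_int:
  assumes "finite F"
  shows "int (card {e \<in> F. P e}) = (\<Sum>e\<in>F. if P e then 1 else 0)"
proof -
  have "(\<Sum>e\<in>F. if P e then (1::int) else 0) = (\<Sum>e\<in>{e \<in> F. P e}. 1)"
    using sum.inter_filter[OF assms, of "\<lambda>_. (1::int)" P] by simp
  then show ?thesis by simp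
qed

lemma dav_sum:
  assumes "simple_graph V E" "finite F" "Ed E \<subseteq> F"
  shows "int (dav V E k1 k2 k3) = (\<Sum>e\<in>F. ind V E k1 k2 k3 e)"
proof -
  define P where "P = (\<lambda>e. \<exists>x y. e = {x, y} \<and> E x y \<and> trip V E x y = (k1, k2, k3))"
  have eq: "{{x, y} | x y. x \<in> V \<and> y \<in> V \<and> E x y
      \<and> card (nbhd V E x \<inter> nbhd V E y) = k1
      \<and> card (nbhd V E x - nbhd V E y - {y}) = k2
      \<and> card (nbhd V E y - nbhd V E x - {x}) = k3}
    = {e \<in> F. P e}"
    using assms unfolding simple_graph_def trip_def Ed_def P_def by blast
  have "(\<Sum>e\<in>F. ind V E k1 k2 k3 e) = (\<Sum>e\<in>F. if P e then 1 else 0)"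
    unfolding ind_def P_def by simp
  then show ?thesis unfolding dav_def eq card_filter_int[OF assms(2)] by simp
qed

lemma trip_swap:
  "trip V E y x = (fst (trip V E x y), snd (snd (trip V E x y)), fst (snd (trip V E x y)))"
  unfolding trip_def by (simp add: Int_commute)

lemma doubleton_ex:
  assumes "\<And>a b. E a b \<Longrightarrow> E b a"
  shows "(\<exists>x' y'. {x, y} = {x', y'} \<and> E x' y' \<and> P x' y') \<longleftrightarrow> (E x y \<and> (P x y \<or> P y x))"
  using assms by (auto simp: doubleton_eq_iff)

lemma nbhd_del:
  assumes "x \<noteq> v"
  shows "nbhd (del_vertex_V V v) (del_vertex_E E v) x = nbhd V E x - {v}"
  using assms unfolding nbhd_def del_vertex_V_def del_vertex_E_def by auto

lemma trip_del:
  assumes "x \<noteq> v" "y \<noteq> v"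
  shows "trip (del_vertex_V V v) (del_vertex_E E v) x y =
    (card (nbhd V E x \<inter> nbhd V E y - {v}), card (nbhd V E x - nbhd V E y - {y} - {v}),
     card (nbhd V E y - nbhd V E x - {x} - {v}))"
proof -
  have 1: "(nbhd V E x - {v}) \<inter> (nbhd V E y - {v}) = nbhd V E x \<inter> nbhd V E y - {v}" by auto
  have 2: "(nbhd V E x - {v}) - (nbhd V E y - {v}) - {y} = nbhd V E x - nbhd V E y - {y} - {v}" by auto
  have 3: "(nbhd V E y - {v}) - (nbhd V E x - {v}) - {x} = nbhd V E y - nbhd V E x - {x} - {v}" by auto
  show ?thesis unfolding trip_def nbhd_del[OF assms(1)] nbhd_del[OF assms(2)] 1 2 3 ..
qed


lemma ind_edge:
  assumes "simple_graph V E" "E x y"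
  shows "ind V E k1 k2 k3 {x, y} = (if trip V E x y = (k1, k2, k3) \<or> trip V E y x = (k1, k2, k3) then 1 else 0)"
proof -
  have s: "\<And>a b. E a b \<Longrightarrow> E b a" using assms(1) unfolding simple_graph_def by blast
  show ?thesis unfolding ind_def using doubleton_ex[of E x y "\<lambda>a b. trip V E a b = (k1, k2, k3)", OF s] assms(2)
    by simp
qed

lemma sg_del:
  assumes "simple_graph V E"
  shows "simple_graph (del_vertex_V V v) (del_vertex_E E v)"
  using assms unfolding simple_graph_def del_vertex_V_def del_vertex_E_def by auto

lemma final_arith: "int a * (if a - 1 = k1 \<and> b = k \<and> c = k then 1 else 0)
     + int b * (if a = k1 \<and> b - 1 = k \<and> c = k then 1 else 0)
     + int c * (if a = k1 \<and> b = k \<and> c - 1 = k then 1 else 0)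
     + int r * (if a = k1 \<and> b = k \<and> c = k then 1 else 0) =
   (2 + int a + int b + int c + int r - 2 - int k1 - 2 * int k) * (if (a,b,c) = (k1,k,k) \<or> (a,c,b) = (k1,k,k) then 1 else 0)
   + (int k1 + 1) * (if (a,b,c) = (k1+1,k,k) \<or> (a,c,b) = (k1+1,k,k) then 1 else 0)
   + (int k + 1) * (if (a,b,c) = (k1,k,k+1) \<or> (a,c,b) = (k1,k,k+1) then 1 else 0)"
  by (cases "a = k1+1"; cases "a=k1"; cases "b=k"; cases "b = k+1"; cases "c=k"; cases "c=k+1"; auto)

lemma edge_count:
  assumes sg: "simple_graph V E" and exy: "E x y"
  shows "(\<Sum>v\<in>V. ind (del_vertex_V V v) (del_vertex_E E v) k1 k k {x, y}) =
    (int (card V) - 2 - int k1 - 2 * int k) * ind V E k1 k k {x, y}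
      + (int k1 + 1) * ind V E (k1 + 1) k k {x, y}
      + (int k + 1) * ind V E k1 k (k + 1) {x, y}"
proof -
  define N where "N = nbhd V E"
  define C where "C = N x \<inter> N y"
  define X where "X = N x - N y - {y}"
  define Y where "Y = N y - N x - {x}"
  define Rst where "Rst = V - {x, y} - C - X - Y"
  define a where "a = card C"
  define b where "b = card X"
  define c where "c = card Y"
  define r where "r = card Rst"
  have fin: "finite V" using sg unfolding simple_graph_def by blast
  have xV: "x \<in> V" and yV: "y \<in> V" and xy: "x \<noteq> y" using sg exy unfolding simple_graph_def by metis+
  have NV: "\<And>z. N z \<subseteq> V" unfolding N_def nbhd_def by auto
  have Nirr: "\<And>z. z \<notin> N z" using sg unfolding N_def nbhd_def simple_graph_def by auto
  have trxy: "trip V E x y = (a, b, c)" unfolding trip_def a_def b_def c_def C_def X_def Y_def N_def ..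
  have tryx: "trip V E y x = (a, c, b)" using trip_swap[of V E y x] trxy by simp
  have ind_v: "ind (del_vertex_V V v) (del_vertex_E E v) k1 k k {x, y} =
      (if v \<noteq> x \<and> v \<noteq> y \<and> (card (C - {v}), card (X - {v}), card (Y - {v})) = (k1, k, k) then 1 else 0)" for v
  proof (cases "v \<noteq> x \<and> v \<noteq> y")
    case True
    have e: "del_vertex_E E v x y" using True exy unfolding del_vertex_E_def by auto
    have t1: "trip (del_vertex_V V v) (del_vertex_E E v) x y = (card (C - {v}), card (X - {v}), card (Y - {v}))"
      using trip_del[of x v y V E] True unfolding C_def X_def Y_def N_def by auto
    have t2: "trip (del_vertex_V V v) (del_vertex_E E v) y x = (card (C - {v}), card (Y - {v}), card (X - {v}))"
      using trip_swap[of "del_vertex_V V v" "del_vertex_E E v" y x] t1 by simp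
    show ?thesis unfolding ind_edge[OF sg_del[OF sg] e] t1 t2 using True by auto
  next
    case False
    have "\<not> (\<exists>x' y'. {x, y} = {x', y'} \<and> del_vertex_E E v x' y' \<and> P x' y')" for P
      using False unfolding del_vertex_E_def by (auto simp: doubleton_eq_iff)
    then show ?thesis using False unfolding ind_def by auto
  qed
  define h where "h v = (if v \<noteq> x \<and> v \<noteq> y \<and> (card (C - {v}), card (X - {v}), card (Y - {v})) = (k1, k, k) then (1::int) else 0)" for v
  have CV: "C \<subseteq> V - {x, y}" unfolding C_def using NV Nirr by blast
  have XV: "X \<subseteq> V - {x, y}" unfolding X_def using NV Nirr by blast
  have YV: "Y \<subseteq> V - {x, y}" unfolding Y_def using NV Nirr by blast
  have Vdec: "V = {x, y} \<union> C \<union> X \<union> Y \<union> Rst" using CV XV YV xV yV unfolding Rst_def by blast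
  have d1: "{x, y} \<inter> C = {}" "({x, y} \<union> C) \<inter> X = {}" "({x, y} \<union> C \<union> X) \<inter> Y = {}"
    "({x, y} \<union> C \<union> X \<union> Y) \<inter> Rst = {}"
    using CV XV YV unfolding Rst_def C_def X_def Y_def by blast+
  have fC: "finite C" "finite X" "finite Y" "finite Rst" "finite {x, y}"
    using CV XV YV fin unfolding Rst_def by (auto intro: finite_subset)
  have sxy: "sum h {x, y} = 0" unfolding h_def using xy by simp
  have sC: "sum h C = int a * (if a - 1 = k1 \<and> b = k \<and> c = k then 1 else 0)"
  proof -
    have "\<And>v. v \<in> C \<Longrightarrow> h v = (if a - 1 = k1 \<and> b = k \<and> c = k then 1 else 0)"
    proof -
      fix v assume v: "v \<in> C"
      have "v \<notin> X" "v \<notin> Y" "v \<noteq> x" "v \<noteq> y" using v CV unfolding C_def X_def Y_def by auto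
      then show "h v = (if a - 1 = k1 \<and> b = k \<and> c = k then 1 else 0)"
        unfolding h_def a_def b_def c_def using v fC by simp
    qed
    then show ?thesis unfolding a_def by simp
  qed
  have sX: "sum h X = int b * (if a = k1 \<and> b - 1 = k \<and> c = k then 1 else 0)"
  proof -
    have "\<And>v. v \<in> X \<Longrightarrow> h v = (if a = k1 \<and> b - 1 = k \<and> c = k then 1 else 0)"
    proof -
      fix v assume v: "v \<in> X"
      have "v \<notin> C" "v \<notin> Y" "v \<noteq> x" "v \<noteq> y" using v XV unfolding C_def X_def Y_def by auto
      then show "h v = (if a = k1 \<and> b - 1 = k \<and> c = k then 1 else 0)"
        unfolding h_def a_def b_def c_def using v fC by simp
    qed
    then show ?thesis unfolding b_def by simp
  qed
  have sY: "sum h Y = int c * (if a = k1 \<and> b = k \<and> c - 1 = k then 1 else 0)"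
  proof -
    have "\<And>v. v \<in> Y \<Longrightarrow> h v = (if a = k1 \<and> b = k \<and> c - 1 = k then 1 else 0)"
    proof -
      fix v assume v: "v \<in> Y"
      have "v \<notin> C" "v \<notin> X" "v \<noteq> x" "v \<noteq> y" using v YV unfolding C_def X_def Y_def by auto
      then show "h v = (if a = k1 \<and> b = k \<and> c - 1 = k then 1 else 0)"
        unfolding h_def a_def b_def c_def using v fC by simp
    qed
    then show ?thesis unfolding c_def by simp
  qed
  have sO: "sum h Rst = int r * (if a = k1 \<and> b = k \<and> c = k then 1 else 0)"
  proof -
    have "\<And>v. v \<in> Rst \<Longrightarrow> h v = (if a = k1 \<and> b = k \<and> c = k then 1 else 0)"
    proof -
      fix v assume v: "v \<in> Rst"
      have "v \<notin> C" "v \<notin> X" "v \<notin> Y" "v \<noteq> x" "v \<noteq> y" using v unfolding Rst_def by auto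
      then show "h v = (if a = k1 \<and> b = k \<and> c = k then 1 else 0)"
        unfolding h_def a_def b_def c_def using v fC by simp
    qed
    then show ?thesis unfolding r_def by simp
  qed
  have u4: "finite ({x, y} \<union> C \<union> X \<union> Y)" "finite ({x, y} \<union> C \<union> X)" "finite ({x, y} \<union> C)"
    using fC by auto
  have "sum h V = sum h {x, y} + sum h C + sum h X + sum h Y + sum h Rst"
    apply (subst Vdec)
    apply (subst sum.union_disjoint[OF u4(1) fC(4) d1(4)])
    apply (subst sum.union_disjoint[OF u4(2) fC(3) d1(3)])
    apply (subst sum.union_disjoint[OF u4(3) fC(2) d1(2)])
    apply (subst sum.union_disjoint[OF fC(5) fC(1) d1(1)])
    by simp
  hence sV: "sum h V = int a * (if a - 1 = k1 \<and> b = k \<and> c = k then 1 else 0)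
     + int b * (if a = k1 \<and> b - 1 = k \<and> c = k then 1 else 0)
     + int c * (if a = k1 \<and> b = k \<and> c - 1 = k then 1 else 0)
     + int r * (if a = k1 \<and> b = k \<and> c = k then 1 else 0)"
    using sxy sC sX sY sO by simp
  have "card V = card {x, y} + a + b + c + r"
    unfolding a_def b_def c_def r_def
    apply (subst Vdec)
    apply (subst card_Un_disjoint[OF u4(1) fC(4) d1(4)])
    apply (subst card_Un_disjoint[OF u4(2) fC(3) d1(3)])
    apply (subst card_Un_disjoint[OF u4(3) fC(2) d1(2)])
    apply (subst card_Un_disjoint[OF fC(5) fC(1) d1(1)])
    by simp
  hence cV: "int (card V) = 2 + int a + int b + int c + int r" using xy by simp
  have lhs: "(\<Sum>v\<in>V. ind (del_vertex_V V v) (del_vertex_E E v) k1 k k {x, y}) = sum h V"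
    unfolding ind_v h_def ..
  show ?thesis unfolding lhs sV cV ind_edge[OF sg exy] trxy tryx
    by (rule final_arith)
qed

lemma Ed_del: "Ed (del_vertex_E E v) \<subseteq> Ed E"
  unfolding Ed_def del_vertex_E_def by auto

theorem corollary17:
  fixes V :: "'a set" and E :: "'a \<Rightarrow> 'a \<Rightarrow> bool" and k1 k :: nat
  assumes "simple_graph V E" and "connected_graph V E"
  shows "(\<Sum>v\<in>V. int (dav (del_vertex_V V v) (del_vertex_E E v) k1 k k))
    = (int (card V) - 2 - int k1 - 2 * int k) * int (dav V E k1 k k)
      + (int k1 + 1) * int (dav V E (k1 + 1) k k)
      + (int k + 1) * int (dav V E k1 k (k + 1))"
proof -
  note sg = assms(1)
  have fE: "finite (Ed E)" using Ed_finite[OF sg] .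
  have "(\<Sum>v\<in>V. int (dav (del_vertex_V V v) (del_vertex_E E v) k1 k k))
     = (\<Sum>v\<in>V. \<Sum>e\<in>Ed E. ind (del_vertex_V V v) (del_vertex_E E v) k1 k k e)"
    using dav_sum[OF sg_del[OF sg] fE Ed_del] by simp
  also have "\<dots> = (\<Sum>e\<in>Ed E. \<Sum>v\<in>V. ind (del_vertex_V V v) (del_vertex_E E v) k1 k k e)"
    by (rule sum.swap)
  also have "\<dots> = (\<Sum>e\<in>Ed E. (int (card V) - 2 - int k1 - 2 * int k) * ind V E k1 k k e
      + (int k1 + 1) * ind V E (k1 + 1) k k e + (int k + 1) * ind V E k1 k (k + 1) e)"
  proof (rule sum.cong[OF refl])
    fix e assume "e \<in> Ed E"
    then obtain x y where "e = {x, y}" "E x y" unfolding Ed_def by auto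
    then show "(\<Sum>v\<in>V. ind (del_vertex_V V v) (del_vertex_E E v) k1 k k e) =
      (int (card V) - 2 - int k1 - 2 * int k) * ind V E k1 k k e
      + (int k1 + 1) * ind V E (k1 + 1) k k e + (int k + 1) * ind V E k1 k (k + 1) e"
      using edge_count[OF sg] by simp
  qed
  also have "\<dots> = (int (card V) - 2 - int k1 - 2 * int k) * int (dav V E k1 k k)
      + (int k1 + 1) * int (dav V E (k1 + 1) k k)
      + (int k + 1) * int (dav V E k1 k (k + 1))"
    unfolding dav_sum[OF sg fE subset_refl] sum.distrib sum_distrib_left ..
  finally show ?thesis .
qed

end
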